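(* Let $A$ be an $n\times n$ binary matrix with zero diagonal. Then there is a homeomorphism $Q^n_{\mathcal{F}_A}\cong M(\mathcal{C}^n_0,\lambda_A)$ which is equivariant with respect to the action of $H=\langle h_1,\dots,h_n\rangle\cong(\mathbb{Z}_2)^n$ on $Q^n_{\mathcal{F}_A}$ and the natural $(\mathbb{Z}_2)^n$-action on $M(\mathcal{C}^n_0,\lambda_A)$, under the isomorphism $h_i\mapsto e_i$.
   Context: $\mathcal{C}^n=\{x\in\mathbb{R}^n: -\tfrac14\le x_i\le\tfrac14\}$; $\mathbf{F}(i)$, $\mathbf{F}(-i)$ ($1\le i\le n$) are the facets in $\{x_i=\tfrac14\}$, $\{x_i=-\tfrac14\}$. Binary matrices have entries in $\mathbb{Z}_2$; $A^i_k$ denotes the $(i,k)$ entry; $\widetilde A=A+I_n$. $\mathcal{F}_A$ pairs $\mathbf{F}(j)$ with $\mathbf{F}(-j)$ via $\tau^A_j(x)=y$ with $y_{|j|}=-x_{|j|}$ and $y_k=(-1)^{A^{|j|}_k}x_k$ for $k\ne|j|$; $Q^n_{\mathcal{F}_A}$ is the quotient of $\mathcal{C}^n$ by the equivalence relation generated by $x\sim\tau^A_j(x)$, $x\in\mathbf{F}(j)$. For $1\le i\le n$, $h_i:\mathcal{C}^n\to\mathcal{C}^n$ negates the $i$-th coordinate; these commute with the maps $\tau^A_j$ and hence $H=\langle h_1,\dots,h_n\rangle$ acts on $Q^n_{\mathcal{F}_A}$. $\mathcal{C}^n_0=\{x\in\mathbb{R}^n:0\le x_i\le\tfrac14\}$,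 with facets $\overline F_j=\mathcal{C}^n_0\cap\{x_j=0\}$ and $\overline F^*_j=\mathcal{C}^n_0\cap\{x_j=\tfrac14\}$. Let $e_1,\dots,e_n$ be the standard basis of $(\mathbb{Z}_2)^n$; $\lambda_A(\overline F_j)=e_j$ and $\lambda_A(\overline F^*_j)=\sum_k\widetilde A^j_k e_k$ (the $j$-th row of $\widetilde A$). Glue-back construction: for a nice manifold with corners $W$ and a function $\mu$ from its facets to $(\mathbb{Z}_2)^m$, for a face $f$ let $G_f$ be the subgroup generated by $\mu(F)$ over facets $F\supseteq f$ (and $G_W=0$); for $p\in W$ let $f(p)$ be the face containing $p$ in its relative interior. $M(W,\mu)=W\times(\mathbb{Z}_2)^m/\sim$ where $(p,g)\sim(p',g')$ iff $p=p'$ and $g-g'\in G_{f(p)}$. The natural $(\mathbb{Z}_2)^m$-action is $g\cdot[(p,g_0)]=[(p,g_0+g)]$. *)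

theory Defs
  imports "HOL-Analysis.Analysis" "HOL-Library.Z2"
begin

definition quot_top :: "'a topology \<Rightarrow> ('a \<Rightarrow> 'b) \<Rightarrow> 'b topology" where
  "quot_top X q = topology (\<lambda>U. U \<subseteq> q ` topspace X \<and> openin X {x \<in> topspace X. q x \<in> U})"

definition gen_equiv :: "'a set \<Rightarrow> ('a \<times> 'a) set \<Rightarrow> ('a \<times> 'a) set" where
  "gen_equiv C R = Id_on C \<union> (R \<union> R\<inverse>)\<^sup>+"

definition cubeC :: "(real^'n) set" where
  "cubeC = {x. \<forall>i. -(1/4) \<le> x$i \<and> x$i \<le> 1/4}"

text \<open>facetC i True = F(i), facetC i False = F(-i)\<close>
definition facetC :: "'n \<Rightarrow> bool \<Rightarrow> (real^'n) set" where
  "facetC i s = {x \<in> cubeC. x$i = (if s then 1/4 else -(1/4))}"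

definition sgn_bit :: "bit \<Rightarrow> real" where
  "sgn_bit b = (if b = 1 then -1 else 1)"

text \<open>tau^A_j for j = +i or -i (the formula only depends on |j| = i).\<close>
definition tauA :: "bit^'n^'n \<Rightarrow> 'n \<Rightarrow> (real^'n) \<Rightarrow> real^'n" where
  "tauA A i x = (\<chi> k. if k = i then - (x$k) else sgn_bit (A$i$k) * x$k)"

definition glue_rel :: "bit^'n^'n \<Rightarrow> ((real^'n) \<times> (real^'n)) set" where
  "glue_rel A = {(x, tauA A i x) | x i s. x \<in> facetC i s}"

definition Qclass :: "bit^'n^'n \<Rightarrow> (real^'n) \<Rightarrow> (real^'n) set" where
  "Qclass A x = gen_equiv cubeC (glue_rel A) `` {x}"

definition QF :: "bit^'n^'n \<Rightarrow> (real^'n) set topology" where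
  "QF A = quot_top (top_of_set cubeC) (Qclass A)"

text \<open>h_g = product of the h_i with g$i = 1 (negating those coordinates); element g of (Z_2)^n.\<close>
definition hvec :: "bit^'n \<Rightarrow> (real^'n) \<Rightarrow> real^'n" where
  "hvec g x = (\<chi> k. if g$k = 1 then - (x$k) else x$k)"

definition hQ :: "bit^'n \<Rightarrow> (real^'n) set \<Rightarrow> (real^'n) set" where
  "hQ g c = hvec g ` c"

inductive_set gen_subgroup :: "'g::ab_group_add set \<Rightarrow> 'g set" for S where
  gen_zero: "0 \<in> gen_subgroup S"
| gen_base: "g \<in> S \<Longrightarrow> g \<in> gen_subgroup S"
| gen_add: "a \<in> gen_subgroup S \<Longrightarrow> b \<in> gen_subgroup S \<Longrightarrow> a + b \<in> gen_subgroup S"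
| gen_neg: "a \<in> gen_subgroup S \<Longrightarrow> - a \<in> gen_subgroup S"

text \<open>Facets of W are given by an indexing Fc :: 'f \<Rightarrow> 'a set.
  f(p): the face containing p in its relative interior, i.e. the intersection of
  W with all facets containing p (W itself if p lies on no facet).\<close>
definition face_of_pt :: "'a set \<Rightarrow> ('f \<Rightarrow> 'a set) \<Rightarrow> 'a \<Rightarrow> 'a set" where
  "face_of_pt W Fc p = W \<inter> \<Inter>{Fc F | F. p \<in> Fc F}"

definition G_face :: "('f \<Rightarrow> 'a set) \<Rightarrow> ('f \<Rightarrow> 'g::ab_group_add) \<Rightarrow> 'a set \<Rightarrow> 'g set" where
  "G_face Fc mu f = gen_subgroup {mu F | F. f \<subseteq> Fc F}"

definition glue_rel_M :: "'a set \<Rightarrow> ('f \<Rightarrow> 'a set) \<Rightarrow> ('f \<Rightarrow> 'g::ab_group_add)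
    \<Rightarrow> (('a \<times> 'g) \<times> ('a \<times> 'g)) set" where
  "glue_rel_M W Fc mu = {((p, g), (p', g')) | p g p' g'.
      p \<in> W \<and> p = p' \<and> g - g' \<in> G_face Fc mu (face_of_pt W Fc p)}"

definition Mclass :: "'a set \<Rightarrow> ('f \<Rightarrow> 'a set) \<Rightarrow> ('f \<Rightarrow> 'g::ab_group_add)
    \<Rightarrow> 'a \<times> 'g \<Rightarrow> ('a \<times> 'g) set" where
  "Mclass W Fc mu pg = glue_rel_M W Fc mu `` {pg}"

definition glueM :: "'a::topological_space set \<Rightarrow> ('f \<Rightarrow> 'a set) \<Rightarrow> ('f \<Rightarrow> 'g::ab_group_add)
    \<Rightarrow> ('a \<times> 'g) set topology" where
  "glueM W Fc mu = quot_top (prod_topology (top_of_set W) (discrete_topology UNIV)) (Mclass W Fc mu)"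

definition glue_act :: "'g::ab_group_add \<Rightarrow> ('a \<times> 'g) set \<Rightarrow> ('a \<times> 'g) set" where
  "glue_act g c = (\<lambda>(p, g0). (p, g0 + g)) ` c"

definition cube0 :: "(real^'n) set" where
  "cube0 = {x. \<forall>i. 0 \<le> x$i \<and> x$i \<le> 1/4}"

text \<open>facet0 (j, False) = bar F_j (x_j = 0), facet0 (j, True) = bar F^*_j (x_j = 1/4).\<close>
definition facet0 :: "'n \<times> bool \<Rightarrow> (real^'n) set" where
  "facet0 js = {x \<in> cube0. x$(fst js) = (if snd js then 1/4 else 0)}"

definition lambdaA :: "bit^'n^'n \<Rightarrow> 'n \<times> bool \<Rightarrow> bit^'n" where
  "lambdaA A js = (if snd js then (A + mat 1)$(fst js) else axis (fst js) 1)"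

end

theory Submission
  imports Defs
begin


lemma istop_quot: "istopology (\<lambda>U. U \<subseteq> q ` topspace X \<and> openin X {x \<in> topspace X. q x \<in> U})"
proof -
  have 1: "S \<inter> T \<subseteq> q ` topspace X \<and> openin X {x \<in> topspace X. q x \<in> S \<inter> T}"
    if S: "S \<subseteq> q ` topspace X \<and> openin X {x \<in> topspace X. q x \<in> S}"
    and T: "T \<subseteq> q ` topspace X \<and> openin X {x \<in> topspace X. q x \<in> T}" for S T
  proof -
    have "{x \<in> topspace X. q x \<in> S \<inter> T} = {x \<in> topspace X. q x \<in> S} \<inter> {x \<in> topspace X. q x \<in> T}" by auto
    then show ?thesis using S T by (auto intro: openin_Int)
  qed
  have 2: "\<Union>K \<subseteq> q ` topspace X \<and> openin X {x \<in> topspace X. q x \<in> \<Union>K}"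
    if K: "\<forall>S\<in>K. S \<subseteq> q ` topspace X \<and> openin X {x \<in> topspace X. q x \<in> S}" for K
  proof -
    have "{x \<in> topspace X. q x \<in> \<Union>K} = (\<Union>S\<in>K. {x \<in> topspace X. q x \<in> S})" by auto
    then show ?thesis using K by auto
  qed
  show ?thesis unfolding istopology_def using 1 2 by blast
qed

lemma openin_quot: "openin (quot_top X q) U \<longleftrightarrow> U \<subseteq> q ` topspace X \<and> openin X {x \<in> topspace X. q x \<in> U}"
  unfolding quot_top_def topology_inverse'[OF istop_quot] by (rule refl)

lemma topspace_quot: "topspace (quot_top X q) = q ` topspace X"
proof -
  have "openin (quot_top X q) (q ` topspace X)"
  proof -
    have "{x \<in> topspace X. q x \<in> q ` topspace X} = topspace X" by auto
    then show ?thesis unfolding openin_quot by auto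
  qed
  then have "q ` topspace X \<subseteq> topspace (quot_top X q)" by (simp add: openin_subset)
  moreover have "topspace (quot_top X q) \<subseteq> q ` topspace X"
    using openin_quot[of X q "topspace (quot_top X q)"] by auto
  ultimately show ?thesis by blast
qed

lemma quotient_map_quot: "quotient_map X (quot_top X q) q"
  unfolding quotient_map_def topspace_quot openin_quot by auto

lemma quot_homeo:
  assumes q1: "quotient_map X Y1 q1" and q2: "quotient_map X Y2 q2"
    and fib: "\<And>x y. x \<in> topspace X \<Longrightarrow> y \<in> topspace X \<Longrightarrow> q1 x = q1 y \<longleftrightarrow> q2 x = q2 y"
  obtains k where "homeomorphic_map Y1 Y2 k" "\<And>x. x \<in> topspace X \<Longrightarrow> k (q1 x) = q2 x"
proof -
  obtain k where k: "continuous_map Y1 Y2 k" "\<And>x. x \<in> topspace X \<Longrightarrow> k (q1 x) = q2 x"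
    using quotient_map_lift_exists[OF q1 quotient_imp_continuous_map[OF q2]] fib by metis
  obtain k' where k': "continuous_map Y2 Y1 k'" "\<And>x. x \<in> topspace X \<Longrightarrow> k' (q2 x) = q1 x"
    using quotient_map_lift_exists[OF q2 quotient_imp_continuous_map[OF q1]] fib by metis
  have "homeomorphic_maps Y1 Y2 k k'"
    unfolding homeomorphic_maps_def
  proof (intro conjI ballI)
    fix y assume "y \<in> topspace Y1"
    then obtain x where "x \<in> topspace X" "y = q1 x" using quotient_imp_surjective_map[OF q1] by blast
    then show "k' (k y) = y" using k k' by simp
  next
    fix y assume "y \<in> topspace Y2"
    then obtain x where "x \<in> topspace X" "y = q2 x" using quotient_imp_surjective_map[OF q2] by blast
    then show "k (k' y) = y" using k k' by simp
  qed (use k k' in auto)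
  then show ?thesis using that k homeomorphic_map_maps by blast
qed



definition absv :: "real^'n \<Rightarrow> real^'n" where "absv x = (\<chi> k. \<bar>x$k\<bar>)"
definition sv :: "real^'n \<Rightarrow> bit^'n" where "sv x = (\<chi> k. if x$k < 0 then 1 else 0)"

lemma bit_cases2: "(b::bit) = 0 \<or> b = 1" by (cases b) auto

lemma hvec_comp: "hvec g (hvec h x) = hvec (h + g) x"
  unfolding hvec_def vec_eq_iff
  by (auto simp: vec_lambda_beta)

lemma hvec_invol: "hvec h (hvec h x) = x"
  unfolding hvec_def vec_eq_iff by auto

lemma hvec_0: "hvec 0 x = x" unfolding hvec_def vec_eq_iff by simp

lemma hvec_sv: "hvec (sv x) (absv x) = x"
  unfolding hvec_def sv_def absv_def vec_eq_iff by auto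

lemma absv_cube: "x \<in> cubeC \<Longrightarrow> absv x \<in> cube0"
  unfolding cubeC_def cube0_def absv_def
proof (intro CollectI allI)
  fix k assume "x \<in> {x. \<forall>i. - (1 / 4) \<le> x $ i \<and> x $ i \<le> 1 / 4}"
  then have "- (1 / 4) \<le> x$k" "x$k \<le> 1/4" by auto
  then show "0 \<le> (\<chi> k. \<bar>x $ k\<bar>) $ k \<and> (\<chi> k. \<bar>x $ k\<bar>) $ k \<le> 1 / 4" by auto
qed

lemma hvec_cube: "p \<in> cube0 \<Longrightarrow> hvec g p \<in> cubeC"
  unfolding cubeC_def cube0_def hvec_def
proof (intro CollectI allI)
  fix k assume "p \<in> {x. \<forall>i. 0 \<le> x $ i \<and> x $ i \<le> 1 / 4}"
  then have "0 \<le> p$k" "p$k \<le> 1/4" by auto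
  then show "- (1 / 4) \<le> (\<chi> k. if g $ k = 1 then - p $ k else p $ k) $ k \<and>
         (\<chi> k. if g $ k = 1 then - p $ k else p $ k) $ k \<le> 1 / 4" by auto
qed

lemma absv_hvec0: "p \<in> cube0 \<Longrightarrow> absv (hvec g p) = p"
  unfolding cube0_def hvec_def absv_def vec_eq_iff by auto

lemma absv_hvec: "absv (hvec g x) = absv x"
  unfolding hvec_def absv_def vec_eq_iff by auto

lemma hvec_cubeC: "x \<in> cubeC \<Longrightarrow> hvec g x \<in> cubeC"
  unfolding cubeC_def hvec_def
proof (intro CollectI allI)
  fix k assume "x \<in> {x. \<forall>i. - (1 / 4) \<le> x $ i \<and> x $ i \<le> 1 / 4}"
  then have "- (1 / 4) \<le> x$k" "x$k \<le> 1/4" by auto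
  then show "- (1 / 4) \<le> (\<chi> k. if g $ k = 1 then - x $ k else x $ k) $ k \<and>
         (\<chi> k. if g $ k = 1 then - x $ k else x $ k) $ k \<le> 1 / 4" by auto
qed

lemma tau_hvec:
  assumes "A$i$i = 0"
  shows "tauA A i x = hvec (lambdaA A (i,True)) x"
  unfolding tauA_def hvec_def lambdaA_def vec_eq_iff sgn_bit_def
  using assms by (auto simp: mat_def)

lemma gen_diff: "a \<in> gen_subgroup S \<Longrightarrow> b \<in> gen_subgroup S \<Longrightarrow> a - b \<in> gen_subgroup S"
  by (metis diff_conv_add_uminus gen_add gen_neg)

lemma gen_sum: "finite I \<Longrightarrow> (\<And>i. i \<in> I \<Longrightarrow> f i \<in> gen_subgroup S) \<Longrightarrow> sum f I \<in> gen_subgroup S"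
  by (induction I rule: finite_induct) (auto intro: gen_zero gen_add)

abbreviation GG :: "bit^'n^'n \<Rightarrow> real^'n \<Rightarrow> (bit^'n) set" where
  "GG A p \<equiv> G_face facet0 (lambdaA A) (face_of_pt cube0 facet0 p)"

lemma in_face: "p \<in> cube0 \<Longrightarrow> p \<in> face_of_pt cube0 facet0 p"
  unfolding face_of_pt_def by auto

lemma face_sub: "p \<in> facet0 F \<Longrightarrow> face_of_pt cube0 facet0 p \<subseteq> facet0 F"
  unfolding face_of_pt_def by (cases F) blast

lemma GG_base: "p \<in> facet0 F \<Longrightarrow> lambdaA A F \<in> GG A p"
  unfolding G_face_def by (rule gen_base) (use face_sub in blast)

lemma GG_gen: "p \<in> cube0 \<Longrightarrow> GG A p = gen_subgroup {lambdaA A F | F. p \<in> facet0 F}"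
  unfolding G_face_def using in_face face_sub by (metis (no_types, lifting) subsetD)

lemma vec_as_sum: "(d::bit^'n) = (\<Sum>k\<in>{k. d$k = 1}. axis k 1)"
proof -
  have "d$j = (\<Sum>k\<in>{k. d$k = 1}. axis k 1) $ j" for j
  proof -
    have "(\<Sum>k\<in>{k. d$k = 1}. axis k (1::bit)) $ j = (\<Sum>k\<in>{k. d$k = 1}. axis k (1::bit) $ j)"
      by (rule sum_component)
    also have "\<dots> = (\<Sum>k\<in>{k. d$k = 1}. if j = k then 1 else 0)"
      by (simp add: axis_def)
    also have "\<dots> = (if d$j = 1 then 1 else 0)"
      by (simp add: sum.delta)
    finally show ?thesis using bit_cases2[of "d$j"] by auto
  qed
  then show ?thesis unfolding vec_eq_iff by blast
qed

lemma hvec_eq_GG: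
  assumes p: "p \<in> cube0" and eq: "hvec a p = hvec b p"
  shows "a - b \<in> GG A p"
proof -
  let ?d = "a - b"
  have "axis k 1 \<in> GG A p" if "?d$k = 1" for k
  proof -
    have "a$k \<noteq> b$k"
    proof
      assume "a$k = b$k" then have "?d$k = 0" by simp
      with that show False by simp
    qed
    have "hvec a p $ k = hvec b p $ k" using eq by simp
    then have "(if a$k = 1 then - p$k else p$k) = (if b$k = 1 then - p$k else p$k)"
      unfolding hvec_def by simp
    then have "p$k = 0" using \<open>a$k \<noteq> b$k\<close> bit_cases2[of "a$k"] bit_cases2[of "b$k"] by auto
    then have "p \<in> facet0 (k, False)" using p unfolding facet0_def by auto
    from GG_base[OF this, of A] show ?thesis by (simp add: lambdaA_def)
  qed
  then have "(\<Sum>k\<in>{k. ?d$k = 1}. axis k 1) \<in> GG A p"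
    unfolding G_face_def by (intro gen_sum) auto
  then show ?thesis by (subst vec_as_sum[of ?d])
qed



abbreviation EE :: "bit^'n^'n \<Rightarrow> ((real^'n) \<times> (real^'n)) set" where
  "EE A \<equiv> gen_equiv cubeC (glue_rel A)"

lemma glue_rel_sub:
  assumes d: "\<forall>i. A$i$i = 0"
  shows "glue_rel A \<subseteq> cubeC \<times> cubeC"
proof
  fix z assume "z \<in> glue_rel A"
  then obtain x i s where z: "z = (x, tauA A i x)" "x \<in> facetC i s" unfolding glue_rel_def by blast
  then have "x \<in> cubeC" unfolding facetC_def by auto
  then show "z \<in> cubeC \<times> cubeC" using z tau_hvec[of A i x] d hvec_cubeC by auto
qed

lemma gen_equiv_equiv:
  assumes "R \<subseteq> C \<times> C"
  shows "equiv C (gen_equiv C R)"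
proof (rule equivI)
  have "R \<union> R\<inverse> \<subseteq> C \<times> C" using assms by auto
  then have T: "(R \<union> R\<inverse>)\<^sup>+ \<subseteq> C \<times> C" by (rule trancl_subset_Sigma)
  then show "gen_equiv C R \<subseteq> C \<times> C" unfolding gen_equiv_def by auto
  show "refl_on C (gen_equiv C R)" unfolding gen_equiv_def refl_on_def by auto
  have "sym (R \<union> R\<inverse>)" unfolding sym_def by auto
  then have "sym ((R \<union> R\<inverse>)\<^sup>+)" by (rule sym_trancl)
  then show "sym (gen_equiv C R)" unfolding gen_equiv_def sym_def by auto
  show "trans (gen_equiv C R)" unfolding gen_equiv_def trans_def
    by (auto intro: trancl_trans)
qed

lemma EE_equiv: "\<forall>i. A$i$i = 0 \<Longrightarrow> equiv cubeC (EE A)"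
  by (rule gen_equiv_equiv[OF glue_rel_sub])

lemma GG_add: "a \<in> GG A p \<Longrightarrow> b \<in> GG A p \<Longrightarrow> a + b \<in> GG A p"
  unfolding G_face_def by (rule gen_add)

lemma GG_zero: "0 \<in> GG A p"
  unfolding G_face_def by (rule gen_zero)

lemma GG_neg: "a \<in> GG A p \<Longrightarrow> - a \<in> GG A p"
  unfolding G_face_def by (rule gen_neg)

lemma GG_diff: "a \<in> GG A p \<Longrightarrow> b \<in> GG A p \<Longrightarrow> a - b \<in> GG A p"
  unfolding G_face_def by (rule gen_diff)

definition PP :: "bit^'n^'n \<Rightarrow> ((real^'n) \<times> (real^'n)) set" where
  "PP A = {(x,y). x \<in> cubeC \<and> y \<in> cubeC \<and> absv x = absv y \<and> (\<exists>h\<in>GG A (absv x). y = hvec h x)}"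

lemma EE_PP:
  fixes A :: "bit^'n^'n"
  assumes d: "\<forall>i. A$i$i = 0"
  shows "EE A \<subseteq> PP A"
proof -
  have Id: "Id_on (cubeC::(real^'n) set) \<subseteq> PP A"
  proof
    fix w assume "w \<in> Id_on (cubeC::(real^'n) set)"
    then obtain x where "w = (x,x)" "x \<in> cubeC" by blast
    then show "w \<in> PP A" unfolding PP_def using GG_zero[of A "absv x"] hvec_0[of x] by force
  qed
  have base: "(x,y) \<in> PP A" if "(x,y) \<in> glue_rel A \<union> (glue_rel A)\<inverse>" for x y
  proof -
    have sub: "glue_rel A \<subseteq> cubeC \<times> cubeC" by (rule glue_rel_sub[OF d])
    have one: "(u, v) \<in> PP A \<and> (v, u) \<in> PP A" if uv: "(u,v) \<in> glue_rel A" for u v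
    proof -
      obtain i s where z: "v = tauA A i u" "u \<in> facetC i s" using uv unfolding glue_rel_def by blast
      have cu: "u \<in> cubeC" "v \<in> cubeC" using sub uv by auto
      have v: "v = hvec (lambdaA A (i,True)) u" using z tau_hvec d by metis
      have "absv u \<in> facet0 (i, True)"
        using z(2) absv_cube[OF cu(1)] unfolding facetC_def facet0_def absv_def
        by (auto split: if_splits)
      then have g: "lambdaA A (i,True) \<in> GG A (absv u)" by (rule GG_base)
      have av: "absv v = absv u" using v absv_hvec by metis
      have inv: "u = hvec (lambdaA A (i,True)) v" by (simp only: v hvec_invol)
      have 1: "(u,v) \<in> PP A" unfolding PP_def using cu v g by (auto simp: absv_hvec)
      have 2: "(v,u) \<in> PP A" unfolding PP_def using cu av g inv by auto
      show ?thesis using 1 2 by blast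
    qed
    from that show ?thesis using one by auto
  qed
  have step: "(x,z) \<in> PP A" if xy: "(x,y) \<in> PP A" and yz: "(y,z) \<in> PP A" for x y z
  proof -
    obtain h1 where h1: "h1 \<in> GG A (absv x)" "y = hvec h1 x" "absv x = absv y" "x \<in> cubeC"
      using xy unfolding PP_def by blast
    obtain h2 where h2: "h2 \<in> GG A (absv y)" "z = hvec h2 y" "absv y = absv z" "z \<in> cubeC"
      using yz unfolding PP_def by blast
    have "z = hvec (h1 + h2) x" using h1 h2 hvec_comp by metis
    moreover have "h1 + h2 \<in> GG A (absv x)" using h1 h2 GG_add by metis
    ultimately show ?thesis unfolding PP_def using h1 h2 by auto
  qed
  have "(glue_rel A \<union> (glue_rel A)\<inverse>)\<^sup>+ \<subseteq> PP A"
  proof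
    fix w assume "w \<in> (glue_rel A \<union> (glue_rel A)\<inverse>)\<^sup>+"
    then obtain x y where w: "w = (x,y)" "(x,y) \<in> (glue_rel A \<union> (glue_rel A)\<inverse>)\<^sup>+" by (cases w) auto
    from w(2) have "(x,y) \<in> PP A"
      by (induction rule: trancl_induct) (auto intro: base step)
    then show "w \<in> PP A" using w by simp
  qed
  then show ?thesis using Id unfolding gen_equiv_def by auto
qed



lemma neg_bitvec: "- (a::bit^'n) = a"
  by (simp add: vec_eq_iff)

lemma hvec_axis0: "p$j = 0 \<Longrightarrow> hvec (g + axis j 1) p = hvec g p"
  unfolding hvec_def vec_eq_iff by (auto simp: axis_def)

lemma EE_trans: "\<forall>i. A$i$i = 0 \<Longrightarrow> (x,y) \<in> EE A \<Longrightarrow> (y,z) \<in> EE A \<Longrightarrow> (x,z) \<in> EE A"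
  using EE_equiv[of A] unfolding equiv_def trans_def by blast

lemma key_rev:
  assumes d: "\<forall>i. A$i$i = 0" and p: "p \<in> cube0" and h: "h \<in> GG A p"
  shows "(hvec g p, hvec (g + h) p) \<in> EE A"
  using h[unfolded G_face_def] 
proof (induction arbitrary: g rule: gen_subgroup.induct)
  case gen_zero
  then show ?case using hvec_cube[OF p] unfolding gen_equiv_def by auto
next
  case (gen_base h)
  then obtain F where F: "h = lambdaA A F" "face_of_pt cube0 facet0 p \<subseteq> facet0 F" by blast
  then have pF: "p \<in> facet0 F" using in_face[OF p] by blast
  obtain j b where jb: "F = (j,b)" by (cases F)
  show ?case
  proof (cases b)
    case False
    then have "p$j = 0" "h = axis j 1" using pF F jb unfolding facet0_def lambdaA_def by auto
    then have "hvec (g + h) p = hvec g p" using hvec_axis0 by simp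
    then show ?thesis using hvec_cube[OF p] unfolding gen_equiv_def by auto
  next
    case True
    then have pj: "p$j = 1/4" "h = lambdaA A (j,True)" using pF F jb unfolding facet0_def by auto
    let ?x = "hvec g p"
    have "?x \<in> facetC j (g$j \<noteq> 1)" using hvec_cube[OF p] pj unfolding facetC_def hvec_def by auto
    then have "(?x, tauA A j ?x) \<in> glue_rel A" unfolding glue_rel_def by blast
    moreover have "tauA A j ?x = hvec (g + h) p"
      using tau_hvec[of A j ?x] d pj hvec_comp by (metis add.commute)
    ultimately show ?thesis unfolding gen_equiv_def by auto
  qed
next
  case (gen_add a b)
  have "(hvec g p, hvec (g + a) p) \<in> EE A" by (rule gen_add.IH(1))
  moreover have "(hvec (g + a) p, hvec (g + a + b) p) \<in> EE A" by (rule gen_add.IH(2))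
  ultimately show ?case using EE_trans[OF d] by (metis add.assoc)
next
  case (gen_neg a)
  then show ?case by (simp add: neg_bitvec)
qed

lemma key:
  assumes d: "\<forall>i. A$i$i = 0" and p: "p \<in> cube0" and p': "p' \<in> cube0"
  shows "(hvec g p, hvec g' p') \<in> EE A \<longleftrightarrow> p = p' \<and> g - g' \<in> GG A p"
proof
  assume "(hvec g p, hvec g' p') \<in> EE A"
  then have "(hvec g p, hvec g' p') \<in> PP A" using EE_PP[OF d] by blast
  then obtain h where h: "absv (hvec g p) = absv (hvec g' p')" "h \<in> GG A (absv (hvec g p))"
     "hvec g' p' = hvec h (hvec g p)"
    unfolding PP_def mem_Collect_eq prod.case by blast
  have pp: "p = p'" using h(1) absv_hvec0 p p' by metis
  have hG: "h \<in> GG A p" using h(2) absv_hvec0[OF p] by simp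
  have "hvec (g + h) p = hvec g' p" using h(3) pp hvec_comp by metis
  then have "(g + h) - g' \<in> GG A p" by (rule hvec_eq_GG[OF p])
  then have "((g + h) - g') - h \<in> GG A p" using hG GG_diff by blast
  then show "p = p' \<and> g - g' \<in> GG A p" using pp by (simp add: algebra_simps)
next
  assume a: "p = p' \<and> g - g' \<in> GG A p"
  then have "- (g - g') \<in> GG A p" using GG_neg by blast
  from key_rev[OF d p this, of g] show "(hvec g p, hvec g' p') \<in> EE A" using a by simp
qed



lemma Qclass_char:
  assumes d: "\<forall>i. A$i$i = 0" and p: "p \<in> cube0"
  shows "Qclass A (hvec g0 p) = {hvec g1 p | g1. g0 - g1 \<in> GG A p}"
proof (rule set_eqI)
  fix y
  show "y \<in> Qclass A (hvec g0 p) \<longleftrightarrow> y \<in> {hvec g1 p | g1. g0 - g1 \<in> GG A p}"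
  proof
    assume "y \<in> Qclass A (hvec g0 p)"
    then have y: "(hvec g0 p, y) \<in> EE A" unfolding Qclass_def by blast
    then have "y \<in> cubeC" using EE_equiv[OF d] unfolding equiv_def by blast
    then have yy: "y = hvec (sv y) (absv y)" "absv y \<in> cube0" using hvec_sv[of y] absv_cube by auto
    have "(hvec g0 p, hvec (sv y) (absv y)) \<in> EE A" using y yy(1) by simp
    then have "p = absv y \<and> g0 - sv y \<in> GG A p" using key[OF d p yy(2)] by blast
    then show "y \<in> {hvec g1 p | g1. g0 - g1 \<in> GG A p}" using yy by auto
  next
    assume "y \<in> {hvec g1 p | g1. g0 - g1 \<in> GG A p}"
    then obtain g1 where "y = hvec g1 p" "g0 - g1 \<in> GG A p" by blast
    then have "(hvec g0 p, y) \<in> EE A" using key[OF d p p] by simp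
    then show "y \<in> Qclass A (hvec g0 p)" unfolding Qclass_def by blast
  qed
qed

lemma hQ_class:
  assumes d: "\<forall>i. A$i$i = 0" and p: "p \<in> cube0"
  shows "hQ g (Qclass A (hvec g0 p)) = Qclass A (hvec (g0 + g) p)"
proof -
  have "hvec g ` {hvec g1 p | g1. g0 - g1 \<in> GG A p} = {hvec g2 p | g2. (g0 + g) - g2 \<in> GG A p}"
  proof (rule set_eqI, rule iffI)
    fix y assume "y \<in> hvec g ` {hvec g1 p | g1. g0 - g1 \<in> GG A p}"
    then obtain g1 where "y = hvec g (hvec g1 p)" "g0 - g1 \<in> GG A p" by blast
    then have "y = hvec (g1 + g) p" "g0 - g1 \<in> GG A p" by (simp_all add: hvec_comp)
    moreover have "(g0 + g) - (g1 + g) = g0 - g1" by simp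
    ultimately show "y \<in> {hvec g2 p | g2. (g0 + g) - g2 \<in> GG A p}" by auto
  next
    fix y assume "y \<in> {hvec g2 p | g2. (g0 + g) - g2 \<in> GG A p}"
    then obtain g2 where g2: "y = hvec g2 p" "(g0 + g) - g2 \<in> GG A p" by blast
    have e1: "hvec g (hvec (g2 - g) p) = y" using g2 by (simp add: hvec_comp)
    have e2: "g0 - (g2 - g) = (g0 + g) - g2" by (simp add: algebra_simps)
    have e3: "g0 - (g2 - g) \<in> GG A p" unfolding e2 by (rule g2(2))
    from e1 e3 show "y \<in> hvec g ` {hvec g1 p | g1. g0 - g1 \<in> GG A p}" by blast
  qed
  then show ?thesis unfolding hQ_def using Qclass_char[OF d p] by simp
qed

lemma Mclass_char:
  assumes p: "p \<in> cube0"
  shows "Mclass cube0 facet0 (lambdaA A) (p, g0) = {(p, g1) | g1. g0 - g1 \<in> GG A p}"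
  unfolding Mclass_def glue_rel_M_def using p by auto

lemma Mclass_eq:
  assumes p: "p \<in> cube0" and p': "p' \<in> cube0"
  shows "Mclass cube0 facet0 (lambdaA A) (p, g) = Mclass cube0 facet0 (lambdaA A) (p', g')
     \<longleftrightarrow> p = p' \<and> g - g' \<in> GG A p"
proof
  assume e: "Mclass cube0 facet0 (lambdaA A) (p, g) = Mclass cube0 facet0 (lambdaA A) (p', g')"
  have "(p', g') \<in> Mclass cube0 facet0 (lambdaA A) (p', g')"
    unfolding Mclass_char[OF p'] using GG_zero by auto
  then have "(p', g') \<in> {(p, g1) | g1. g - g1 \<in> GG A p}" using e Mclass_char[OF p] by simp
  then show "p = p' \<and> g - g' \<in> GG A p" by auto
next
  assume a: "p = p' \<and> g - g' \<in> GG A p"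
  have "g - g1 \<in> GG A p \<longleftrightarrow> g' - g1 \<in> GG A p" for g1
  proof
    assume "g - g1 \<in> GG A p"
    then have "(g - g1) - (g - g') \<in> GG A p" using a GG_diff by blast
    then show "g' - g1 \<in> GG A p" by (simp add: algebra_simps)
  next
    assume "g' - g1 \<in> GG A p"
    then have "(g' - g1) + (g - g') \<in> GG A p" using a GG_add by blast
    then show "g - g1 \<in> GG A p" by (simp add: algebra_simps)
  qed
  then show "Mclass cube0 facet0 (lambdaA A) (p, g) = Mclass cube0 facet0 (lambdaA A) (p', g')"
    using a Mclass_char[OF p] Mclass_char[OF p'] by auto
qed

lemma act_class:
  assumes p: "p \<in> cube0"
  shows "glue_act g (Mclass cube0 facet0 (lambdaA A) (p, g0)) = Mclass cube0 facet0 (lambdaA A) (p, g0 + g)"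
proof -
  have "(\<lambda>(p, g0). (p, g0 + g)) ` {(p, g1) | g1. g0 - g1 \<in> GG A p} = {(p, g2) | g2. (g0 + g) - g2 \<in> GG A p}"
  proof (rule set_eqI, rule iffI)
    fix y assume "y \<in> (\<lambda>(p, g0). (p, g0 + g)) ` {(p, g1) | g1. g0 - g1 \<in> GG A p}"
    then obtain g1 where "y = (p, g1 + g)" "g0 - g1 \<in> GG A p" by auto
    moreover have "(g0 + g) - (g1 + g) = g0 - g1" by simp
    ultimately show "y \<in> {(p, g2) | g2. (g0 + g) - g2 \<in> GG A p}" by auto
  next
    fix y assume "y \<in> {(p, g2) | g2. (g0 + g) - g2 \<in> GG A p}"
    then obtain g2 where g2: "y = (p, g2)" "(g0 + g) - g2 \<in> GG A p" by blast
    have "(\<lambda>(p, g0). (p, g0 + g)) (p, g2 - g) = y" using g2 by simp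
    moreover have "g0 - (g2 - g) = (g0 + g) - g2" by (simp add: algebra_simps)
    ultimately show "y \<in> (\<lambda>(p, g0). (p, g0 + g)) ` {(p, g1) | g1. g0 - g1 \<in> GG A p}" using g2
      by (metis (mono_tags, lifting) image_eqI mem_Collect_eq)
  qed
  then show ?thesis unfolding glue_act_def using Mclass_char[OF p] by simp
qed



lemma finite_bitvec: "finite (UNIV :: (bit^'n) set)"
proof -
  have "UNIV \<subseteq> (\<lambda>v::bool^'n. \<chi> i. if v$i then (1::bit) else 0) ` UNIV"
  proof
    fix w :: "bit^'n"
    have "w = (\<lambda>v::bool^'n. \<chi> i. if v$i then (1::bit) else 0) (\<chi> i. w$i = 1)"
      unfolding vec_eq_iff by (auto simp: bit_cases2)
    then show "w \<in> range (\<lambda>v::bool^'n. \<chi> i. if v$i then (1::bit) else 0)" by blast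
  qed
  moreover have "finite (UNIV :: (bool^'n) set)" by simp
  ultimately show ?thesis using finite_surj by blast
qed

lemma compact_cube0: "compact (cube0 :: (real^'n) set)"
proof -
  have "cube0 = {(0::real^'n) .. (\<chi> i. 1/4)}"
    unfolding cube0_def by (auto simp: less_eq_vec_def atLeastAtMost_iff)
  then have "cube0 = cbox (0::real^'n) (\<chi> i. 1/4)" by (simp add: interval_cbox_cart)
  then show ?thesis using compact_cbox by metis
qed

lemma cont_vec:
  assumes "\<And>k. continuous_map X euclideanreal (\<lambda>x. F x k)"
  shows "continuous_map X euclidean (\<lambda>x. (\<chi> k. F x k) :: real^'n)"
  unfolding continuous_map_atin limitin_canonical_iff
proof
  fix x assume "x \<in> topspace X"
  then have "\<And>k. ((\<lambda>y. F y k) \<longlongrightarrow> F x k) (atin X x)"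
    using assms unfolding continuous_map_atin limitin_canonical_iff by blast
  then show "((\<lambda>x. \<chi> k. F x k) \<longlongrightarrow> (\<chi> k. F x k)) (atin X x)"
    by (rule tendsto_vec_lambda)
qed

lemma cont_phi:
  "continuous_map (prod_topology (top_of_set (cube0::(real^'n) set)) (discrete_topology (UNIV::(bit^'n) set)))
     euclidean (\<lambda>(p, g). hvec g p)"
proof -
  let ?X = "prod_topology (top_of_set (cube0::(real^'n) set)) (discrete_topology (UNIV::(bit^'n) set))"
  have eq: "(\<lambda>(p, g). hvec g p) = (\<lambda>x. \<chi> k. sgn_bit (snd x $ k) * (fst x $ k))"
    unfolding hvec_def sgn_bit_def by (auto simp: fun_eq_iff)
  have c1: "continuous_map ?X euclideanreal (\<lambda>x. sgn_bit (snd x $ k))" for k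
  proof -
    have "continuous_map (discrete_topology (UNIV::(bit^'n) set)) euclideanreal (\<lambda>g. sgn_bit (g $ k))"
      by simp
    from continuous_map_compose[OF continuous_map_snd this] show ?thesis by (simp add: o_def)
  qed
  have c2: "continuous_map ?X euclideanreal (\<lambda>x. fst x $ k)" for k
  proof -
    have "continuous_map (top_of_set (cube0::(real^'n) set)) euclideanreal (\<lambda>p. p $ k)"
      by (simp add: continuous_on_component continuous_on_id)
    from continuous_map_compose[OF continuous_map_fst this] show ?thesis by (simp add: o_def)
  qed
  show ?thesis unfolding eq
    by (rule cont_vec) (rule continuous_map_real_mult[OF c1 c2])
qed

theorem mainTheorem14:
  fixes A :: "bit^'n^'n"
  assumes "\<forall>i. A$i$i = 0"
  shows "\<exists>f. homeomorphic_map (QF A) (glueM cube0 facet0 (lambdaA A)) f \<and>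
    (\<forall>g c. c \<in> topspace (QF A) \<longrightarrow> f (hQ g c) = glue_act g (f c))"
proof -
  note d = assms
  define X where "X = prod_topology (top_of_set (cube0::(real^'n) set)) (discrete_topology (UNIV::(bit^'n) set))"
  define phi where "phi = (\<lambda>(p::real^'n, g::bit^'n). hvec g p)"
  have tX: "topspace X = cube0 \<times> UNIV" by (simp add: X_def)
  have img: "phi ` topspace X = cubeC"
  proof
    show "phi ` topspace X \<subseteq> cubeC" unfolding tX phi_def using hvec_cube by auto
    show "cubeC \<subseteq> phi ` topspace X"
    proof
      fix x :: "real^'n" assume "x \<in> cubeC"
      then have "(absv x, sv x) \<in> topspace X" "phi (absv x, sv x) = x"
        unfolding tX phi_def using absv_cube hvec_sv by auto
      then show "x \<in> phi ` topspace X" by (metis image_eqI)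
    qed
  qed
  have cphi: "continuous_map X (top_of_set cubeC) phi"
    unfolding continuous_map_in_subtopology
    using cont_phi img unfolding X_def phi_def by auto
  have cX: "compact_space X"
  proof -
    have "compact_space (top_of_set (cube0::(real^'n) set))"
      by (rule compact_space_subtopology) (simp add: compact_cube0)
    moreover have "compact_space (discrete_topology (UNIV::(bit^'n) set))"
      by (simp add: compact_space_discrete_topology finite_bitvec)
    ultimately show ?thesis unfolding X_def compact_space_prod_topology by blast
  qed
  have qphi: "quotient_map X (top_of_set cubeC) phi"
    by (rule continuous_imp_quotient_map[OF cphi cX]) (use img in \<open>auto intro: Hausdorff_space_subtopology\<close>)
  have q1: "quotient_map X (QF A) (Qclass A \<circ> phi)"
    unfolding QF_def by (rule quotient_map_compose[OF qphi quotient_map_quot])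
  have q2: "quotient_map X (glueM cube0 facet0 (lambdaA A)) (Mclass cube0 facet0 (lambdaA A))"
    unfolding glueM_def X_def by (rule quotient_map_quot)
  have fib: "(Qclass A \<circ> phi) x = (Qclass A \<circ> phi) y \<longleftrightarrow>
       Mclass cube0 facet0 (lambdaA A) x = Mclass cube0 facet0 (lambdaA A) y"
    if xX: "x \<in> topspace X" and yX: "y \<in> topspace X" for x y
  proof -
    obtain p g p' g' where xy: "x = (p,g)" "y = (p',g')" "p \<in> cube0" "p' \<in> cube0"
      using xX yX tX by (cases x, cases y) auto
    have "(Qclass A \<circ> phi) x = (Qclass A \<circ> phi) y \<longleftrightarrow> Qclass A (hvec g p) = Qclass A (hvec g' p')"
      using xy unfolding phi_def by simp
    also have "\<dots> \<longleftrightarrow> (hvec g p, hvec g' p') \<in> EE A"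
      unfolding Qclass_def by (rule eq_equiv_class_iff[OF EE_equiv[OF d] hvec_cube[OF xy(3)] hvec_cube[OF xy(4)]])
    also have "\<dots> \<longleftrightarrow> p = p' \<and> g - g' \<in> GG A p" by (rule key[OF d xy(3) xy(4)])
    also have "\<dots> \<longleftrightarrow> Mclass cube0 facet0 (lambdaA A) x = Mclass cube0 facet0 (lambdaA A) y"
      using Mclass_eq[OF xy(3) xy(4)] xy by simp
    finally show ?thesis .
  qed
  obtain k where k: "homeomorphic_map (QF A) (glueM cube0 facet0 (lambdaA A)) k"
     "\<And>x. x \<in> topspace X \<Longrightarrow> k ((Qclass A \<circ> phi) x) = Mclass cube0 facet0 (lambdaA A) x"
    using quot_homeo[OF q1 q2 fib] by blast
  have "k (hQ g c) = glue_act g (k c)" if "c \<in> topspace (QF A)" for g c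
  proof -
    obtain x where x: "x \<in> topspace X" "c = (Qclass A \<circ> phi) x"
      using \<open>c \<in> topspace (QF A)\<close> quotient_imp_surjective_map[OF q1] by blast
    obtain p g0 where pg: "x = (p, g0)" "p \<in> cube0" using x tX by (cases x) auto
    have c: "c = Qclass A (hvec g0 p)" using x pg unfolding phi_def by simp
    have x2: "(p, g0 + g) \<in> topspace X" using pg tX by simp
    have "hQ g c = (Qclass A \<circ> phi) (p, g0 + g)"
      using c hQ_class[OF d pg(2)] unfolding phi_def by simp
    then have "k (hQ g c) = Mclass cube0 facet0 (lambdaA A) (p, g0 + g)" using k(2)[OF x2] by simp
    also have "\<dots> = glue_act g (Mclass cube0 facet0 (lambdaA A) (p, g0))"
      by (rule act_class[OF pg(2), symmetric])
    also have "\<dots> = glue_act g (k c)" using k(2)[OF x(1)] x(2) pg(1) by simp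
    finally show ?thesis .
  qed
  then show ?thesis using k(1) by blast
qed

end
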